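(* Let $\mathcal A,\mathcal B>0$, $\alpha,\beta\in(0,1)$, $h,\tau>0$. If $$\frac{\tau^{\alpha}(-\alpha^2+4\alpha-2)\mathcal A+\tau^{\beta}(-\beta^2+4\beta-2)\mathcal B}{h^2}\le\frac{37}{120},$$ then for every real $\theta$, with $s=\sin^2(\theta h/2)$, $$\mathcal P=\Big[1-\tfrac{8}{45}s^2\Big]-4g_1^{(\alpha,\beta)}s\Big[1+\tfrac13 s\Big]\ge0.$$
   Context: $\varpi_\ell^{(\sigma)}=(-1)^\ell\binom{\sigma}{\ell}$, $g_0^{(\sigma)}=\frac{1+\sigma}{2}\varpi_0^{(\sigma)}$, $g_\ell^{(\sigma)}=\frac{1+\sigma}{2}\varpi_\ell^{(\sigma)}+\frac{1-\sigma}{2}\varpi_{\ell-1}^{(\sigma)}$ ($\ell\ge1$); $\mu_\alpha=\tau^\alpha\mathcal A/h^2$, $\mu_\beta=\tau^\beta\mathcal B/h^2$, $g_\ell^{(\alpha,\beta)}=\mu_\alpha g_\ell^{(1-\alpha)}+\mu_\beta g_\ell^{(1-\beta)}$. *)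

theory Defs
  imports Complex_Main
begin

definition varpi :: "real \<Rightarrow> nat \<Rightarrow> real" where
  "varpi \<sigma> l = (-1) ^ l * (\<sigma> gchoose l)"

definition gcoef :: "real \<Rightarrow> nat \<Rightarrow> real" where
  "gcoef \<sigma> l = (if l = 0 then (1 + \<sigma>) / 2 * varpi \<sigma> 0
     else (1 + \<sigma>) / 2 * varpi \<sigma> l + (1 - \<sigma>) / 2 * varpi \<sigma> (l - 1))"

definition mu :: "real \<Rightarrow> real \<Rightarrow> real \<Rightarrow> real \<Rightarrow> real" where
  "mu \<tau> \<gamma> C h = \<tau> powr \<gamma> * C / h^2"

definition gab :: "real \<Rightarrow> real \<Rightarrow> real \<Rightarrow> real \<Rightarrow> real \<Rightarrow> real \<Rightarrow> nat \<Rightarrow> real" where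
  "gab \<tau> h \<alpha> \<beta> A B l = mu \<tau> \<alpha> A h * gcoef (1 - \<alpha>) l + mu \<tau> \<beta> B h * gcoef (1 - \<beta>) l"

end

theory Submission
  imports Defs
begin

lemma gab1: "gab \<tau> h \<alpha> \<beta> A B 1 =
  (\<tau> powr \<alpha> * (- (\<alpha>^2) + 4*\<alpha> - 2) * A + \<tau> powr \<beta> * (- (\<beta>^2) + 4*\<beta> - 2) * B) / h^2 / 2"
  unfolding gab_def gcoef_def varpi_def mu_def
  by (simp add: diff_divide_distrib add_divide_distrib algebra_simps power2_eq_square)

theorem lemma6:
  fixes A B \<alpha> \<beta> h \<tau> :: real
  assumes "A > 0" "B > 0" "0 < \<alpha>" "\<alpha> < 1" "0 < \<beta>" "\<beta> < 1" "h > 0" "\<tau> > 0"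
    and "(\<tau> powr \<alpha> * (- (\<alpha>^2) + 4*\<alpha> - 2) * A + \<tau> powr \<beta> * (- (\<beta>^2) + 4*\<beta> - 2) * B) / h^2 \<le> 37/120"
  shows "\<forall>\<theta>::real. let s = (sin (\<theta> * h / 2))^2 in
           (1 - 8/45 * s^2) - 4 * gab \<tau> h \<alpha> \<beta> A B 1 * s * (1 + s/3) \<ge> 0"
proof
  fix \<theta> :: real
  define s where "s = (sin (\<theta> * h / 2))^2"
  define g where "g = gab \<tau> h \<alpha> \<beta> A B 1"
  have aux: "\<And>X::real. X \<le> 37/120 \<Longrightarrow> X / 2 \<le> 37/240" by simp
  have g: "g \<le> 37/240" unfolding g_def gab1 by (rule aux[OF assms(9)])
  have s0: "0 \<le> s" unfolding s_def by simp
  have s1: "s \<le> 1" unfolding s_def by (simp add: sin_squared_eq)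
  have q: "0 \<le> s * (1 + s/3)" using s0 by simp
  have "4 * g * s * (1 + s/3) \<le> 4 * (37/240) * (s * (1 + s/3))"
    using mult_right_mono[OF g q] by simp
  moreover have "1 - 8/45 * s^2 - 4 * (37/240) * (s * (1 + s/3)) \<ge> 0"
  proof -
    have "s^2 \<le> s" using s0 s1 by (simp add: power2_eq_square mult_left_le)
    moreover have "1 - 8/45 * s^2 - 4 * (37/240) * (s * (1 + s/3)) = 1 - 69/180 * s^2 - 111/180 * s"
      by (simp add: algebra_simps power2_eq_square)
    ultimately show ?thesis using s1 by linarith
  qed
  ultimately show "let s = (sin (\<theta> * h / 2))^2 in
           (1 - 8/45 * s^2) - 4 * gab \<tau> h \<alpha> \<beta> A B 1 * s * (1 + s/3) \<ge> 0"
    unfolding Let_def s_def[symmetric] g_def[symmetric] by linarith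
qed

end
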